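(* For all $n\ge10$ and any 2-wise independent distribution $\mathcal{P}$ over $\mathbb{F}_2[X_1,\dots,X_n]$, $$\mathbb{E}_{p\sim\mathcal{P}}\big[|\hat W^p(\mathbf{0})|^2\big]=\tfrac12,\qquad \mathbb{E}_{p\sim\mathcal{P}}\big[|\hat W^p(\mathbf{e})|^2\big]\le2^{-n/2}\ \text{ for all }\mathbf{e}\in\mathbb{F}_{2^n}\setminus\{\mathbf{0}\}.$$
   Context: Elements of $\mathbb{F}_{2^n}$ are identified with $\mathbb{F}_2^n$ via a fixed basis, and $\mathrm{Tr}:\mathbb{F}_{2^n}\to\mathbb{F}_2$ is the absolute trace. For a polynomial $p$, let $N_p$ be its number of roots in $\mathbb{F}_2^n$; $W^p(\mathbf{z})=N_p^{-1/2}$ if $p(\mathbf{z})=0$ and $W^p(\mathbf{z})=0$ otherwise (so $W^p\equiv0$ if $N_p=0$); $\hat W^p(\mathbf{e})=2^{-n/2}\sum_{\mathbf{z}\in\mathbb{F}_{2^n}}W^p(\mathbf{z})(-1)^{\mathrm{Tr}(\mathbf{e}\mathbf{z})}$. A distribution $\mathcal{P}$ is 2-wise independent if for all distinct $\mathbf{x}_1,\mathbf{x}_2\in\mathbb{F}_2^n$ and $a_1,a_2\in\mathbb{F}_2$, $\Pr_{p\sim\mathcal{P}}[p(\mathbf{x}_1)=a_1\wedge p(\mathbf{x}_2)=a_2]=\tfrac14$. *)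

theory Defs
  imports "HOL-Probability.Probability" "HOL-Library.Poly_Mapping" "HOL-Library.Z2"
begin

text \<open>Multivariate polynomials over F_2 in the standard sparse representation:
  a monomial is a finitely supported exponent vector (variable index => exponent),
  a polynomial is a finitely supported map from monomials to coefficients in F_2 (type bit).
  Variables X_1..X_n are indexed 0..n-1.\<close>
type_synonym mpoly2 = "(nat \<Rightarrow>\<^sub>0 nat) \<Rightarrow>\<^sub>0 bit"

definition vars2 :: "mpoly2 \<Rightarrow> nat set" where
  "vars2 p = (\<Union>m\<in>Poly_Mapping.keys p. Poly_Mapping.keys m)"

definition eval2 :: "mpoly2 \<Rightarrow> (nat \<Rightarrow> bit) \<Rightarrow> bit" where
  "eval2 p x = (\<Sum>m\<in>Poly_Mapping.keys p.
      Poly_Mapping.lookup p m * (\<Prod>i\<in>Poly_Mapping.keys m. x i ^ Poly_Mapping.lookup m i))"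

definition F2vec :: "nat \<Rightarrow> (nat \<Rightarrow> bit) set" where
  "F2vec n = {x. \<forall>i\<ge>n. x i = 0}"

text \<open>Identification F_2^n -> F_{2^n} via a basis b_0,...,b_{n-1}.\<close>
definition emb :: "nat \<Rightarrow> (nat \<Rightarrow> 'f::field) \<Rightarrow> (nat \<Rightarrow> bit) \<Rightarrow> 'f" where
  "emb n b x = (\<Sum>i<n. (if x i = 1 then b i else 0))"

text \<open>Absolute trace of F_{2^n} over F_2 (its value lies in the prime field {0,1}).\<close>
definition trace2 :: "nat \<Rightarrow> 'f::field \<Rightarrow> 'f" where
  "trace2 n y = (\<Sum>i<n. y ^ (2 ^ i))"

definition chi :: "nat \<Rightarrow> 'f::field \<Rightarrow> real" where
  "chi n y = (if trace2 n y = 0 then 1 else -1)"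

definition Nroots :: "nat \<Rightarrow> mpoly2 \<Rightarrow> nat" where
  "Nroots n p = card {x \<in> F2vec n. eval2 p x = 0}"

text \<open>W^p(z) for z = emb x.\<close>
definition W :: "nat \<Rightarrow> mpoly2 \<Rightarrow> (nat \<Rightarrow> bit) \<Rightarrow> real" where
  "W n p x = (if eval2 p x = 0 then 1 / sqrt (real (Nroots n p)) else 0)"

text \<open>hat W^p(e) = 2^{-n/2} * sum over z in F_{2^n} of W^p(z) (-1)^{Tr(e z)};
  the sum over z is taken via the bijection emb from F_2^n.\<close>
definition What :: "nat \<Rightarrow> (nat \<Rightarrow> 'f::field) \<Rightarrow> mpoly2 \<Rightarrow> 'f \<Rightarrow> real" where
  "What n b p e = 2 powr (- real n / 2) *
     (\<Sum>x\<in>F2vec n. W n p x * chi n (e * emb n b x))"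

definition two_wise_independent :: "nat \<Rightarrow> mpoly2 pmf \<Rightarrow> bool" where
  "two_wise_independent n P \<longleftrightarrow>
     (\<forall>x1\<in>F2vec n. \<forall>x2\<in>F2vec n. \<forall>a1 a2 :: bit. x1 \<noteq> x2 \<longrightarrow>
        measure_pmf.prob P {p. eval2 p x1 = a1 \<and> eval2 p x2 = a2} = 1/4)"

end

theory Submission
  imports Defs "HOL-Computational_Algebra.Polynomial"
begin

lemma card_times_zero:
  fixes y :: "'f::{field,finite}"
  shows "of_nat CARD('f) * y = 0"
proof -
  have "(\<Sum>x\<in>UNIV. x) = (\<Sum>x\<in>UNIV. x + y)"
    by (rule sum.reindex_bij_witness[of _ "\<lambda>x. x + y" "\<lambda>x. x - y"]) auto
  also have "\<dots> = (\<Sum>x\<in>UNIV. x) + of_nat CARD('f) * y"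
    by (simp add: sum.distrib)
  finally show ?thesis by simp
qed

lemma char2:
  assumes "CARD('f::{field,finite}) = 2 ^ n" "n \<ge> 1"
  shows "(2::'f) = 0"
proof -
  have "(of_nat (2^n)::'f) = 0" using card_times_zero[where y="1::'f"] assms by simp
  hence "(2::'f)^n = 0" by simp
  thus ?thesis by simp
qed

lemma fermat:
  fixes y :: "'f::{field,finite}"
  shows "y ^ CARD('f) = y"
proof (cases "y = 0")
  case True thus ?thesis by simp
next
  case False
  let ?A = "UNIV - {0::'f}"
  have "(\<Prod>x\<in>?A. y * x) = (\<Prod>x\<in>?A. x)"
    by (rule prod.reindex_bij_witness[of _ "\<lambda>x. x / y" "\<lambda>x. y * x"]) (use False in auto)
  moreover have "(\<Prod>x\<in>?A. y * x) = y ^ card ?A * (\<Prod>x\<in>?A. x)"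
    by (simp add: prod.distrib)
  moreover have "(\<Prod>x\<in>?A. x) \<noteq> 0" by simp
  ultimately have "y ^ card ?A = 1" by simp
  moreover have "card ?A = CARD('f) - 1" by (simp add: card_Diff_subset)
  moreover have "CARD('f) \<ge> 1" by (simp add: Suc_leI)
  ultimately show ?thesis
    by (metis One_nat_def Suc_diff_le diff_Suc_1 mult.right_neutral power_Suc)
qed

lemma frob:
  assumes "(2::'f::field) = 0"
  shows "((x::'f) + y) ^ (2 ^ i) = x ^ (2 ^ i) + y ^ (2 ^ i)"
proof (induction i)
  case 0 then show ?case by simp
next
  case (Suc i)
  have sq: "(a + b)^2 = a^2 + b^2" for a b :: 'f
  proof -
    have "(a+b)^2 = a^2 + b^2 + 2*a*b" by (simp add: power2_eq_square algebra_simps)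
    thus ?thesis using assms by simp
  qed
  have "(x + y) ^ (2 ^ Suc i) = ((x+y)^(2^i))^2" by (simp add: power_mult[symmetric] mult.commute)
  also have "\<dots> = (x^(2^i))^2 + (y^(2^i))^2" using Suc sq by simp
  also have "\<dots> = x ^ (2 ^ Suc i) + y ^ (2 ^ Suc i)" by (simp add: power_mult[symmetric] mult.commute)
  finally show ?case .
qed

lemma sq_sum:
  assumes "(2::'f::field) = 0"
  shows "(\<Sum>i\<in>I. f i :: 'f)^2 = (\<Sum>i\<in>I. (f i)^2)"
proof (induction I rule: infinite_finite_induct)
  case (insert x F)
  have "(f x + sum f F)^2 = (f x)^2 + (sum f F)^2 + 2 * f x * sum f F"
    by (simp add: power2_eq_square algebra_simps)
  thus ?case using insert assms by simp
qed auto

lemma trace_add: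
  assumes "(2::'f::field) = 0"
  shows "trace2 n ((x::'f) + y) = trace2 n x + trace2 n y"
  unfolding trace2_def using frob[OF assms] by (simp add: sum.distrib)

lemma trace_01:
  fixes y :: "'f::{field,finite}"
  assumes "CARD('f) = 2 ^ n" "n \<ge> 1"
  shows "trace2 n y = 0 \<or> trace2 n y = 1"
proof -
  have two: "(2::'f) = 0" using char2 assms by blast
  have "(trace2 n y)^2 = (\<Sum>i<n. y ^ (2 ^ Suc i))"
    unfolding trace2_def sq_sum[OF two] by (simp add: power_mult[symmetric] mult.commute)
  moreover have "(\<Sum>i<Suc n. y ^ (2 ^ i)) = y + (\<Sum>i<n. y ^ (2 ^ Suc i))"
    by (subst sum.lessThan_Suc_shift) simp
  moreover have "(\<Sum>i<Suc n. y ^ (2 ^ i)) = trace2 n y + y"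
    using fermat[of y] assms by (simp add: trace2_def)
  ultimately have "(trace2 n y)^2 = trace2 n y" by (simp add: algebra_simps)
  thus ?thesis by (simp add: power2_eq_square)
qed

lemma trace_nontriv:
  fixes dummy :: "'f::{field,finite}"
  assumes "CARD('f) = 2 ^ n" "n \<ge> 1"
  shows "\<exists>y::'f. trace2 n y = 1"
proof -
  define Q :: "'f poly" where "Q = (\<Sum>i<n. monom 1 (2^i))"
  have ev: "poly Q y = trace2 n y" for y
    by (simp add: Q_def poly_sum poly_monom trace2_def)
  have "coeff Q (2^(n-1)) = (\<Sum>i<n. if 2^i = (2::nat)^(n-1) then 1 else 0)"
    by (simp add: Q_def coeff_sum coeff_monom)
  also have "\<dots> = (\<Sum>i\<in>{n-1}. 1)"
    by (rule sum.mono_neutral_cong_right) (use assms in auto)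
  finally have "coeff Q (2^(n-1)) = 1" by simp
  hence Q0: "Q \<noteq> 0" by auto
  have "degree Q \<le> 2^(n-1)"
    unfolding Q_def by (rule degree_sum_le) (auto intro: order.trans[OF degree_monom_le])
  hence "card {x. poly Q x = 0} \<le> 2^(n-1)" using card_poly_roots_bound[OF Q0] by linarith
  moreover have "(2::nat)^(n-1) < 2^n" using assms by simp
  ultimately have "{x. poly Q x = 0} \<noteq> UNIV" using assms by (metis leD)
  then obtain y :: 'f where "trace2 n y \<noteq> 0" using ev by auto
  thus ?thesis using trace_01[OF assms, of y] by blast
qed

lemma chi_sum0:
  fixes dummy :: "'f::{field,finite}"
  assumes "CARD('f) = 2 ^ n" "n \<ge> 1"
  shows "(\<Sum>w\<in>(UNIV::'f set). chi n w) = 0"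
proof -
  have two: "(2::'f) = 0" using char2 assms by blast
  obtain y0 :: 'f where y0: "trace2 n y0 = 1" using trace_nontriv[OF assms] by blast
  have flip: "chi n (w + y0) = - chi n w" for w
  proof -
    have "trace2 n (w + y0) = trace2 n w + 1" using trace_add[OF two] y0 by simp
    moreover have "(1::'f) + 1 = 0" using two by (metis one_add_one)
    ultimately show ?thesis using trace_01[OF assms, of w] by (auto simp: chi_def)
  qed
  have "(\<Sum>w\<in>(UNIV::'f set). chi n w) = (\<Sum>w\<in>UNIV. chi n (w + y0))"
    by (rule sum.reindex_bij_witness[of _ "\<lambda>x. x + y0" "\<lambda>x. x - y0"]) auto
  also have "\<dots> = - (\<Sum>w\<in>(UNIV::'f set). chi n w)" by (simp add: flip sum_negf)
  finally show ?thesis by simp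
qed


lemma pmf_int_bound:
  assumes "\<And>p. \<bar>f p\<bar> \<le> B"
  shows "integrable (measure_pmf P) (f :: 'a \<Rightarrow> real)"
  by (rule measure_pmf.integrable_const_bound[where B=B]) (use assms in auto)

theorem mainTheorem5:
  fixes n :: nat and P :: "mpoly2 pmf" and b :: "nat \<Rightarrow> 'f::{field,finite}"
  assumes n: "n \<ge> 10"
    and card: "CARD('f) = 2 ^ n"
    and basis: "bij_betw (emb n b) (F2vec n) (UNIV :: 'f set)"
    and polys: "\<forall>p\<in>set_pmf P. vars2 p \<subseteq> {..<n}"
    and indep: "two_wise_independent n P"
  shows "measure_pmf.expectation P (\<lambda>p. \<bar>What n b p 0\<bar>^2) = 1/2 \<and>
         (\<forall>e::'f. e \<noteq> 0 \<longrightarrow>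
           measure_pmf.expectation P (\<lambda>p. \<bar>What n b p e\<bar>^2) \<le> 2 powr (- real n / 2))"
proof -
  define F where "F = F2vec n"
  have n1: "n \<ge> 1" using n by simp
  have finF: "finite F" using bij_betw_finite[OF basis] by (simp add: F_def)
  have cardF: "card F = 2^n" using bij_betw_same_card[OF basis] card by (simp add: F_def)
  define A where "A x = {p. eval2 p x = (0::bit)}" for x
  have p2: "measure_pmf.prob P (A x \<inter> A y) = 1/4" if "x\<in>F" "y\<in>F" "x\<noteq>y" for x y
  proof -
    have "A x \<inter> A y = {p. eval2 p x = 0 \<and> eval2 p y = 0}" by (auto simp: A_def)
    thus ?thesis using indep that unfolding two_wise_independent_def F_def by simp
  qed
  have p1: "measure_pmf.prob P (A x) = 1/2" if "x\<in>F" for x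
  proof -
    define x2 where "x2 = x(0 := x 0 + 1)"
    have x2F: "x2 \<in> F" using that n1 by (auto simp: F_def F2vec_def x2_def)
    have "x2 \<noteq> x"
    proof
      assume "x2 = x"
      hence "x 0 + 1 = x 0" unfolding x2_def by (metis fun_upd_same)
      thus False by (cases "x 0 = 0") auto
    qed
    have eq: "A x = {p. eval2 p x = 0 \<and> eval2 p x2 = 0} \<union> {p. eval2 p x = 0 \<and> eval2 p x2 = 1}"
      by (auto simp: A_def)
    have "measure_pmf.prob P (A x) = measure_pmf.prob P {p. eval2 p x = 0 \<and> eval2 p x2 = 0}
        + measure_pmf.prob P {p. eval2 p x = 0 \<and> eval2 p x2 = 1}"
      unfolding eq by (rule measure_pmf.finite_measure_Union) auto
    also have "\<dots> = 1/4 + 1/4"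
    proof -
      have h: "measure_pmf.prob P {p. eval2 p x = a1 \<and> eval2 p x2 = a2} = 1/4" for a1 a2
        using indep that x2F \<open>x2 \<noteq> x\<close> unfolding two_wise_independent_def F_def by auto
      show ?thesis by (simp only: h)
    qed
    finally show ?thesis by simp
  qed
  have pxy: "measure_pmf.prob P (A x \<inter> A y) = 1/4 + (if x = y then 1/4 else 0)"
    if "x\<in>F" "y\<in>F" for x y
    using p1 p2 that by auto
  have intb: "integrable (measure_pmf P) (\<lambda>p. c * indicator (A x) p :: real)" for c x
    by (rule pmf_int_bound[where B="\<bar>c\<bar>"]) (auto simp: indicator_def)
  have intb2: "integrable (measure_pmf P) (\<lambda>p. c * (indicator (A x) p * indicator (A y) p) :: real)" for c x y
    by (rule pmf_int_bound[where B="\<bar>c\<bar>"]) (auto simp: indicator_def)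
  have Nsum: "real (Nroots n p) = (\<Sum>x\<in>F. indicator (A x) p)" for p
  proof -
    have "real (Nroots n p) = (\<Sum>x\<in>{x\<in>F. eval2 p x = 0}. 1)"
      by (simp add: Nroots_def F_def)
    also have "\<dots> = (\<Sum>x\<in>F. indicator (A x) p)"
      by (subst sum.inter_filter[OF finF]) (auto simp: A_def indicator_def intro!: sum.cong)
    finally show ?thesis .
  qed
  define a where "a = (2::real) powr (- real n / 2)"
  define s where "s = (2::real) powr (real n / 2)"
  have spos: "s > 0" by (simp add: s_def)
  have a_s: "a = 1 / s" by (simp add: a_def s_def powr_minus_divide)
  have s2: "s^2 = 2^n"
  proof -
    have "s^2 = 2 powr (real n/2 + real n/2)" by (simp add: s_def power2_eq_square powr_add[symmetric])
    also have "\<dots> = 2 ^ n" by (simp add: powr_realpow)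
    finally show ?thesis .
  qed
  have a2: "a^2 = 1 / 2^n" using s2 by (simp add: a_s power_divide)
  have Wx: "W n p x = indicator (A x) p / sqrt (real (Nroots n p))" for p x
    by (simp add: W_def A_def indicator_def)
  have chi0: "chi n (0::'f) = 1" by (simp add: chi_def trace2_def power_0_left)
  have W0: "\<bar>What n b p 0\<bar>^2 = (\<Sum>x\<in>F. indicator (A x) p) / 2^n" for p
  proof -
    have "What n b p 0 = a * (real (Nroots n p) / sqrt (real (Nroots n p)))"
      by (simp add: What_def a_def chi0 Wx F_def[symmetric] sum_divide_distrib[symmetric] Nsum)
    also have "\<dots> = a * sqrt (real (Nroots n p))" by (simp add: real_div_sqrt)
    finally have "\<bar>What n b p 0\<bar>^2 = a^2 * real (Nroots n p)"
      by (simp add: power_mult_distrib)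
    thus ?thesis using a2 Nsum by simp
  qed
  have part1: "measure_pmf.expectation P (\<lambda>p. \<bar>What n b p 0\<bar>^2) = 1/2"
  proof -
    have "measure_pmf.expectation P (\<lambda>p. \<bar>What n b p 0\<bar>^2)
        = measure_pmf.expectation P (\<lambda>p. \<Sum>x\<in>F. (1/2^n) * indicator (A x) p)"
      unfolding W0 by (simp add: sum_divide_distrib)
    also have "\<dots> = (\<Sum>x\<in>F. measure_pmf.expectation P (\<lambda>p. (1/2^n) * indicator (A x) p))"
      by (rule Bochner_Integration.integral_sum) (rule intb)
    also have "\<dots> = (\<Sum>x\<in>F. (1/2^n) * measure_pmf.prob P (A x))"
      by simp
    also have "\<dots> = (\<Sum>x\<in>F. (1/2^n) * (1/2))" by (intro sum.cong refl) (simp add: p1)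
    also have "\<dots> = 1/2" using cardF by simp
    finally show ?thesis .
  qed
  have part2: "measure_pmf.expectation P (\<lambda>p. \<bar>What n b p e\<bar>^2) \<le> 2 powr (- real n / 2)"
    if e0: "e \<noteq> 0" for e :: 'f
  proof -
    define \<psi> where "\<psi> x = chi n (e * emb n b x)" for x
    have psi_sq: "\<psi> x * \<psi> x = 1" for x by (simp add: \<psi>_def chi_def)
    have psi_abs: "\<bar>\<psi> x\<bar> = 1" for x by (simp add: \<psi>_def chi_def)
    have psi_sum: "(\<Sum>x\<in>F. \<psi> x) = 0"
    proof -
      have "(\<Sum>x\<in>F. \<psi> x) = (\<Sum>z\<in>(UNIV::'f set). chi n (e * z))"
        unfolding \<psi>_def F_def by (rule sum.reindex_bij_betw[OF basis])
      also have "\<dots> = (\<Sum>w\<in>(UNIV::'f set). chi n w)"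
        by (rule sum.reindex_bij_witness[of _ "\<lambda>w. w / e" "\<lambda>z. e * z"]) (use e0 in auto)
      also have "\<dots> = 0" using chi_sum0[OF card n1] .
      finally show ?thesis .
    qed
    define S where "S p = (\<Sum>x\<in>F. indicator (A x) p * \<psi> x)" for p
    define N where "N p = real (Nroots n p)" for p
    define c where "c = s / 2"
    have cpos: "c > 0" using spos by (simp add: c_def)
    have SN: "\<bar>S p\<bar> \<le> N p" for p
    proof -
      have "\<bar>S p\<bar> \<le> (\<Sum>x\<in>F. \<bar>indicator (A x) p * \<psi> x\<bar>)" unfolding S_def by (rule sum_abs)
      also have "\<dots> = N p" by (simp add: N_def Nsum abs_mult psi_abs)
      finally show ?thesis .
    qed
    have Wexp: "What n b p e = a * S p / sqrt (N p)" for p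
      by (simp add: What_def a_def Wx F_def[symmetric] S_def N_def \<psi>_def sum_divide_distrib[symmetric])
    have bound: "\<bar>What n b p e\<bar>^2 \<le> a^2 / (2*c) * (S p ^2 + c^2)" for p
    proof -
      have Nn: "N p \<ge> 0" by (simp add: N_def)
      have "\<bar>What n b p e\<bar>^2 = a^2 * (S p ^2 / N p)"
        using Nn by (simp add: Wexp power_mult_distrib power_divide)
      also have "\<dots> \<le> a^2 * \<bar>S p\<bar>"
      proof (rule mult_left_mono)
        show "S p ^2 / N p \<le> \<bar>S p\<bar>"
        proof (cases "N p = 0")
          case True thus ?thesis by simp
        next
          case False
          hence Np: "N p > 0" using Nn by simp
          have "S p ^2 = \<bar>S p\<bar> * \<bar>S p\<bar>" by (simp add: power2_eq_square)
          also have "\<dots> \<le> \<bar>S p\<bar> * N p" using SN[of p] by (intro mult_left_mono) auto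
          finally show ?thesis using Np by (simp add: divide_le_eq)
        qed
      qed simp
      also have "\<dots> \<le> a^2 / (2*c) * (S p ^2 + c^2)"
      proof -
        have "0 \<le> (\<bar>S p\<bar> - c)^2" by simp
        hence "2 * c * \<bar>S p\<bar> \<le> S p ^2 + c^2" by (simp add: power2_eq_square algebra_simps)
        hence "\<bar>S p\<bar> \<le> (S p ^2 + c^2) / (2*c)" using cpos by (simp add: le_divide_eq mult.commute)
        hence "a^2 * \<bar>S p\<bar> \<le> a^2 * ((S p ^2 + c^2) / (2*c))" by (rule mult_left_mono) simp_all
        thus ?thesis by simp
      qed
      finally show ?thesis .
    qed
    have ES2: "measure_pmf.expectation P (\<lambda>p. S p ^2) = 2^n / 4"
    proof -
      have intb3: "integrable (measure_pmf P) (\<lambda>p. c * indicator B p :: real)" for c B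
        by (rule pmf_int_bound[where B="\<bar>c\<bar>"]) (auto simp: indicator_def)
      have eqS: "(\<lambda>p. S p ^2) = (\<lambda>p. \<Sum>x\<in>F. \<Sum>y\<in>F. (\<psi> x * \<psi> y) * indicator (A x \<inter> A y) p)"
        by (rule ext) (simp add: S_def power2_eq_square sum_product algebra_simps indicator_inter_arith)
      have "measure_pmf.expectation P (\<lambda>p. S p ^2)
          = (\<Sum>x\<in>F. measure_pmf.expectation P (\<lambda>p. \<Sum>y\<in>F. (\<psi> x * \<psi> y) * indicator (A x \<inter> A y) p))"
        unfolding eqS apply (rule Bochner_Integration.integral_sum)
        apply (rule Bochner_Integration.integrable_sum)
        apply (rule intb3)
        done
      also have "\<dots> = (\<Sum>x\<in>F. \<Sum>y\<in>F. measure_pmf.expectation P (\<lambda>p. (\<psi> x * \<psi> y) * indicator (A x \<inter> A y) p))"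
        by (intro sum.cong refl Bochner_Integration.integral_sum intb3)
      also have "\<dots> = (\<Sum>x\<in>F. \<Sum>y\<in>F. (\<psi> x * \<psi> y) * measure_pmf.prob P (A x \<inter> A y))"
        by simp
      also have "\<dots> = (\<Sum>x\<in>F. \<Sum>y\<in>F. (\<psi> x * \<psi> y) / 4 + (if x = y then 1/4 else 0))"
        by (intro sum.cong refl) (simp add: pxy distrib_left psi_sq)
      also have "\<dots> = (\<Sum>x\<in>F. \<psi> x) * (\<Sum>y\<in>F. \<psi> y) / 4 + (\<Sum>x\<in>F. 1/4)"
        by (simp add: sum.distrib sum_product sum_divide_distrib finF)
      also have "\<dots> = 2^n / 4" using psi_sum cardF by simp
      finally show ?thesis .
    qed
    have SF: "\<bar>S p\<bar> \<le> real (card F)" for p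
    proof -
      have "N p \<le> (\<Sum>x\<in>F. 1)" unfolding N_def Nsum by (rule sum_mono) (simp add: indicator_def)
      thus ?thesis using SN[of p] by simp
    qed
    have S2F: "S p ^2 \<le> (real (card F))^2" for p
      using power_mono[OF SF[of p], of 2] by simp
    have intS2: "integrable (measure_pmf P) (\<lambda>p. S p ^2)"
      by (rule pmf_int_bound[where B="(real (card F))^2"]) (use S2F in simp)
    define g where "g p = a^2 / (2*c) * (S p ^2 + c^2)" for p
    have intg: "integrable (measure_pmf P) g"
      unfolding g_def using intS2 by simp
    have gB: "g p \<le> a^2 / (2*c) * ((real (card F))^2 + c^2)" for p
      unfolding g_def using S2F[of p] cpos by (intro mult_left_mono) auto
    have intW: "integrable (measure_pmf P) (\<lambda>p. \<bar>What n b p e\<bar>^2)"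
      by (rule pmf_int_bound[where B="a^2 / (2*c) * ((real (card F))^2 + c^2)"])
         (use bound gB in \<open>auto simp: g_def intro: order.trans\<close>)
    have "measure_pmf.expectation P (\<lambda>p. \<bar>What n b p e\<bar>^2) \<le> measure_pmf.expectation P g"
      by (rule integral_mono[OF intW intg]) (unfold g_def, rule bound)
    also have "\<dots> = a^2 / (2*c) * (2^n/4 + c^2)"
      unfolding g_def using intS2 ES2 by simp
    also have "\<dots> = 1 / (2 * s)"
    proof -
      have "c^2 = 2^n/4" using s2 by (simp add: c_def power_divide)
      thus ?thesis using a2 spos by (simp add: c_def field_simps)
    qed
    also have "\<dots> \<le> 1 / s" using spos by (simp add: field_simps)
    also have "\<dots> = 2 powr (- real n / 2)" using a_s a_def by simp
    finally show ?thesis .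
  qed
  show ?thesis using part1 part2 by blast
qed
end
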